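(* Let $H\subseteq\mathbb{R}^2$ be a functionally connected set such that $\mathrm{pr}_1[H]=\mathbb{R}$. Then for every $f\in C(\mathbb{R},\mathbb{R})$ and every closed set $E\subseteq\mathbb{R}$ such that the graph of $f\restriction E$ is included in $H$, there exists $g\in C(\mathbb{R},\mathbb{R})$ such that $g\restriction E=f\restriction E$ and the graph of $g$ is included in $H$.
   Context: $\mathrm{pr}_1[H]$ is the projection of $H$ to the first coordinate. A set $H\subseteq\mathbb{R}^2$ is functionally connected if for any two points $(x_1,y_1),(x_2,y_2)\in H$ with $x_1\neq x_2$ there exists a continuous function $h$ on the closed interval with endpoints $x_1,x_2$ such that $h(x_1)=y_1$, $h(x_2)=y_2$, and the graph of $h$ is included in $H$. *)

theory Defs
  imports "HOL-Analysis.Analysis"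
begin

definition functionally_connected :: "(real \<times> real) set \<Rightarrow> bool" where
  "functionally_connected H \<longleftrightarrow>
     (\<forall>x1 y1 x2 y2. (x1, y1) \<in> H \<and> (x2, y2) \<in> H \<and> x1 \<noteq> x2 \<longrightarrow>
        (\<exists>h :: real \<Rightarrow> real.
           continuous_on {min x1 x2 .. max x1 x2} h \<and> h x1 = y1 \<and> h x2 = y2 \<and>
           (\<forall>x \<in> {min x1 x2 .. max x1 x2}. (x, h x) \<in> H)))"

end

theory Submission
  imports Defs
begin
lemma conn:
  assumes "functionally_connected H" "(x1,y1)\<in>H" "(x2,y2)\<in>H" "x1<x2"
  shows "\<exists>h. continuous_on {x1..x2} h \<and> h x1 = y1 \<and> h x2 = y2 \<and> (\<forall>x\<in>{x1..x2}. (x, h x)\<in>H)"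
proof -
  from assms(1) have "\<exists>h :: real \<Rightarrow> real.
           continuous_on {min x1 x2 .. max x1 x2} h \<and> h x1 = y1 \<and> h x2 = y2 \<and>
           (\<forall>x \<in> {min x1 x2 .. max x1 x2}. (x, h x) \<in> H)"
    unfolding functionally_connected_def using assms(2-4) by blast
  moreover have "min x1 x2 = x1" "max x1 x2 = x2" using assms(4) by auto
  ultimately show ?thesis by simp
qed

lemma cont_near:
  fixes w :: "real \<Rightarrow> real"
  assumes "continuous_on S w" "x\<in>S" "\<bar>w x - c\<bar> < e"
  shows "\<exists>d>0. \<forall>y\<in>S. \<bar>y - x\<bar> < d \<longrightarrow> \<bar>w y - c\<bar> < e"
proof -
  have "e - \<bar>w x - c\<bar> > 0" using assms(3) by simp
  then obtain d where d: "d>0" "\<forall>y\<in>S. dist y x < d \<longrightarrow> dist (w y) (w x) < e - \<bar>w x - c\<bar>"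
    using assms(1,2) unfolding continuous_on_iff by blast
  show ?thesis
  proof (intro exI[of _ d] conjI ballI impI)
    fix y assume "y\<in>S" "\<bar>y - x\<bar> < d"
    then have "\<bar>w y - w x\<bar> < e - \<bar>w x - c\<bar>" using d by (simp add: dist_real_def)
    then show "\<bar>w y - c\<bar> < e" by linarith
  qed (use d in auto)
qed

definition med :: "real \<Rightarrow> real \<Rightarrow> real \<Rightarrow> real" where
  "med u v w = max (min u v) (min (max u v) w)"

lemma med_uvu: "med u v u = u" unfolding med_def by auto
lemma med_uvv: "med u v v = v" unfolding med_def by auto
lemma med_in: "med u v w = u \<or> med u v w = v \<or> med u v w = w" unfolding med_def max_def min_def by auto
lemma med_bd: "\<bar>u - c\<bar> < e \<Longrightarrow> \<bar>v - c\<bar> < e \<Longrightarrow> \<bar>med u v w - c\<bar> < e" unfolding med_def by auto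

lemma key:
  fixes k :: "real \<Rightarrow> real"
  assumes fc: "functionally_connected H" and ab: "a < b"
    and k: "continuous_on {a..b} k" "\<forall>y\<in>{a..b}. (y, k y) \<in> H" "\<forall>y\<in>{a..b}. \<bar>k y - c\<bar> < e"
    and A: "(a,ya)\<in>H" "\<bar>ya - c\<bar> < e" and B: "(b,yb)\<in>H" "\<bar>yb - c\<bar> < e"
  shows "\<exists>h. continuous_on {a..b} h \<and> h a = ya \<and> h b = yb \<and> (\<forall>y\<in>{a..b}. (y, h y)\<in>H)
     \<and> (\<forall>y\<in>{a..b}. \<bar>h y - c\<bar> < e)"
proof -
  obtain w where w: "continuous_on {a..b} w" "w a = ya" "w b = yb" "\<forall>x\<in>{a..b}. (x, w x)\<in>H"
    using conn[OF fc A(1) B(1) ab] by blast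
  obtain d1 where d1: "d1>0" "\<forall>y\<in>{a..b}. \<bar>y - a\<bar> < d1 \<longrightarrow> \<bar>w y - c\<bar> < e"
    using cont_near[OF w(1), of a c e] ab A(2) w(2) by auto
  define s where "s = min (a + d1/2) ((a+b)/2)"
  have s: "a < s" "s < b" using d1 ab by (auto simp: s_def min_def)
  have ws: "\<forall>y\<in>{a..s}. \<bar>w y - c\<bar> < e" using d1 s by (auto simp: s_def)
  obtain d2 where d2: "d2>0" "\<forall>y\<in>{a..b}. \<bar>y - b\<bar> < d2 \<longrightarrow> \<bar>w y - c\<bar> < e"
    using cont_near[OF w(1), of b c e] ab B(2) w(3) by auto
  define t where "t = max (b - d2/2) ((s+b)/2)"
  have t: "s < t" "t < b" using d2 s by (auto simp: t_def max_def)
  have wt: "\<forall>y\<in>{t..b}. \<bar>w y - c\<bar> < e" using d2 t s by (auto simp: t_def)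
  have ksH: "(s, k s) \<in> H" "(t, k t) \<in> H" using k(2) s t by auto
  obtain w1 where w1: "continuous_on {a..s} w1" "w1 a = ya" "w1 s = k s" "\<forall>x\<in>{a..s}. (x, w1 x)\<in>H"
    using conn[OF fc A(1) ksH(1) s(1)] by blast
  obtain w2 where w2: "continuous_on {t..b} w2" "w2 t = k t" "w2 b = yb" "\<forall>x\<in>{t..b}. (x, w2 x)\<in>H"
    using conn[OF fc ksH(2) B(1) t(2)] by blast
  define h where "h y = (if y \<le> s then med (w y) (k y) (w1 y) else if y \<le> t then k y else med (w y) (k y) (w2 y))" for y
  have c1: "continuous_on {a..s} h"
  proof -
    have "continuous_on {a..s} (\<lambda>y. med (w y) (k y) (w1 y))"
      unfolding med_def
      by (intro continuous_intros continuous_on_subset[OF w(1)] continuous_on_subset[OF k(1)] w1(1)) (use s in auto)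
    then show ?thesis by (rule continuous_on_cong[THEN iffD1, rotated 2]) (auto simp: h_def)
  qed
  have c2: "continuous_on {s..t} h"
  proof -
    have "continuous_on {s..t} k" by (rule continuous_on_subset[OF k(1)]) (use s t in auto)
    then show ?thesis by (rule continuous_on_cong[THEN iffD1, rotated 2]) (auto simp: h_def w1(3) med_uvv)
  qed
  have c3: "continuous_on {t..b} h"
  proof -
    have "continuous_on {t..b} (\<lambda>y. med (w y) (k y) (w2 y))"
      unfolding med_def
      by (intro continuous_intros continuous_on_subset[OF w(1)] continuous_on_subset[OF k(1)] w2(1)) (use s t in auto)
    then show ?thesis by (rule continuous_on_cong[THEN iffD1, rotated 2]) (use s t in \<open>auto simp: h_def w2(2) med_uvv\<close>)
  qed
  have "continuous_on ({a..s} \<union> {s..t} \<union> {t..b}) h"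
    by (intro continuous_on_closed_Un c1 c2 c3) auto
  moreover have "{a..s} \<union> {s..t} \<union> {t..b} = {a..b}" using s t by auto
  ultimately have hc: "continuous_on {a..b} h" by simp
  have ha: "h a = ya" using s by (simp add: h_def w(2) w1(2) med_uvu)
  have hb: "h b = yb" using s t by (simp add: h_def w(3) w2(3) med_uvu)
  have hH: "\<forall>y\<in>{a..b}. (y, h y)\<in>H"
  proof
    fix y assume y: "y\<in>{a..b}"
    show "(y, h y)\<in>H"
    proof (cases "y \<le> s")
      case True then show ?thesis using med_in[of "w y" "k y" "w1 y"] w(4) k(2) w1(4) y
        by (auto simp: h_def)
    next
      case False then show ?thesis using med_in[of "w y" "k y" "w2 y"] w(4) k(2) w2(4) y
        by (auto simp: h_def)
    qed
  qed
  have hbd: "\<forall>y\<in>{a..b}. \<bar>h y - c\<bar> < e"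
  proof
    fix y assume y: "y\<in>{a..b}"
    show "\<bar>h y - c\<bar> < e"
    proof (cases "y \<le> s")
      case True then show ?thesis using med_bd ws k(3) y by (auto simp: h_def)
    next
      case False then show ?thesis using med_bd wt k(3) y by (auto simp: h_def)
    qed
  qed
  show ?thesis using hc ha hb hH hbd by blast
qed

lemma main:
  fixes H :: "(real \<times> real) set" and E :: "real set" and f :: "real \<Rightarrow> real"
  assumes fc: "functionally_connected H" and cE: "closed E"
    and lb: "\<forall>x. \<exists>a\<in>E. a \<le> x" and ub: "\<forall>x. \<exists>b\<in>E. x \<le> b"
    and fH: "\<forall>x\<in>E. (x, f x)\<in>H"
    and fcont: "\<forall>p\<in>E. \<forall>e>0. \<exists>d>0. \<forall>z\<in>E. \<bar>z - p\<bar> < d \<longrightarrow> \<bar>f z - f p\<bar> < e"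
    and yH: "\<forall>x. \<exists>y. (x,y)\<in>H"
  shows "\<exists>g. continuous_on UNIV g \<and> (\<forall>x\<in>E. g x = f x) \<and> (\<forall>x. (x, g x)\<in>H)"
proof -
  define adm where "adm a b g \<longleftrightarrow> continuous_on {a..b} g \<and> g a = f a \<and> g b = f b \<and> (\<forall>y\<in>{a..b}. (y, g y)\<in>H)" for a b and g :: "real \<Rightarrow> real"
  define S where "S a b = {M. \<exists>g. adm a b g \<and> (\<forall>y\<in>{a..b}. \<bar>g y - f a\<bar> \<le> M)}" for a b
  define G where "G a b = (SOME g. adm a b g \<and> (\<forall>y\<in>{a..b}. \<bar>g y - f a\<bar> \<le> Inf (S a b) + (b - a)))" for a b
  have Gprop: "adm a b (G a b) \<and> (\<forall>y\<in>{a..b}. \<bar>G a b y - f a\<bar> \<le> M + (b - a))"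
    if "a < b" "M \<in> S a b" for a b M
  proof -
    have bdd: "bdd_below (S a b)"
      unfolding bdd_below_def S_def
    proof (intro exI[of _ 0] ballI)
      fix M assume "M \<in> {M. \<exists>g. adm a b g \<and> (\<forall>y\<in>{a..b}. \<bar>g y - f a\<bar> \<le> M)}"
      then obtain g where "\<forall>y\<in>{a..b}. \<bar>g y - f a\<bar> \<le> M" by blast
      then have "\<bar>g a - f a\<bar> \<le> M" using that(1) by auto
      then show "0 \<le> M" by linarith
    qed
    have ne: "S a b \<noteq> {}" using that by blast
    have "Inf (S a b) < Inf (S a b) + (b - a)" using that(1) by simp
    from cInf_lessD[OF ne this] obtain M' where M': "M' \<in> S a b" "M' < Inf (S a b) + (b - a)"
      by blast
    then obtain g' where g': "adm a b g'" "\<forall>y\<in>{a..b}. \<bar>g' y - f a\<bar> \<le> M'"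
      unfolding S_def by blast
    have "\<exists>g. adm a b g \<and> (\<forall>y\<in>{a..b}. \<bar>g y - f a\<bar> \<le> Inf (S a b) + (b - a))"
      using g' M'(2) by (intro exI[of _ g']) force
    then have G1: "adm a b (G a b) \<and> (\<forall>y\<in>{a..b}. \<bar>G a b y - f a\<bar> \<le> Inf (S a b) + (b - a))"
      unfolding G_def by (rule someI_ex)
    have "Inf (S a b) \<le> M" using cInf_lower[OF that(2) bdd] .
    then show ?thesis using G1 by force
  qed
  have Sne: "\<exists>M. M \<in> S a b" if ab: "a \<in> E" "b \<in> E" "a < b" for a b
  proof -
    obtain w where w: "continuous_on {a..b} w" "w a = f a" "w b = f b" "\<forall>x\<in>{a..b}. (x, w x)\<in>H"
      using conn[OF fc _ _ ab(3)] fH ab by blast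
    have "compact (w ` {a..b})" by (rule compact_continuous_image[OF w(1)]) simp
    then obtain B where B: "\<forall>x\<in>w ` {a..b}. norm x \<le> B"
      using compact_imp_bounded bounded_iff by metis
    have "adm a b w" using w unfolding adm_def by blast
    moreover have "\<forall>y\<in>{a..b}. \<bar>w y - f a\<bar> \<le> B + \<bar>f a\<bar>"
    proof
      fix y assume "y \<in> {a..b}"
      then have "\<bar>w y\<bar> \<le> B" using B by auto
      then show "\<bar>w y - f a\<bar> \<le> B + \<bar>f a\<bar>" by linarith
    qed
    ultimately show ?thesis unfolding S_def by blast
  qed
  have Gadm: "adm a b (G a b)" if "a \<in> E" "b \<in> E" "a < b" for a b
    using Sne[OF that] Gprop[OF that(3)] by blast
  define lo where "lo x = Sup (E \<inter> {..x})" for x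
  define hi where "hi x = Inf (E \<inter> {x..})" for x
  have lo: "lo x \<in> E \<and> lo x \<le> x \<and> (\<forall>z\<in>E. z \<le> x \<longrightarrow> z \<le> lo x)" for x
  proof -
    have ne: "E \<inter> {..x} \<noteq> {}" using lb by auto
    have bd: "bdd_above (E \<inter> {..x})" by (rule bdd_aboveI[of _ x]) auto
    have "lo x \<in> E \<inter> {..x}" unfolding lo_def
      by (rule closed_contains_Sup[OF ne bd]) (simp add: cE closed_Int)
    moreover have "\<forall>z\<in>E. z \<le> x \<longrightarrow> z \<le> lo x" unfolding lo_def
      using cSup_upper[OF _ bd] by auto
    ultimately show ?thesis by auto
  qed
  have hi: "hi x \<in> E \<and> x \<le> hi x \<and> (\<forall>z\<in>E. x \<le> z \<longrightarrow> hi x \<le> z)" for x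
  proof -
    have ne: "E \<inter> {x..} \<noteq> {}" using ub by auto
    have bd: "bdd_below (E \<inter> {x..})" by (rule bdd_belowI[of _ x]) auto
    have "hi x \<in> E \<inter> {x..}" unfolding hi_def
      by (rule closed_contains_Inf[OF ne bd]) (simp add: cE closed_Int)
    moreover have "\<forall>z\<in>E. x \<le> z \<longrightarrow> hi x \<le> z" unfolding hi_def
      using cInf_lower[OF _ bd] by auto
    ultimately show ?thesis by auto
  qed
  have gap: "lo x < x \<and> x < hi x \<and> (\<forall>z\<in>E. z \<le> lo x \<or> hi x \<le> z)" if "x \<notin> E" for x
  proof -
    have "lo x \<noteq> x" "hi x \<noteq> x" using lo[of x] hi[of x] that by auto
    moreover have "\<forall>z\<in>E. z \<le> lo x \<or> hi x \<le> z"
      using lo[of x] hi[of x] by (meson linear)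
    ultimately show ?thesis using lo[of x] hi[of x] by auto
  qed
  have gap2: "y \<notin> E \<and> lo y = lo x \<and> hi y = hi x" if "x \<notin> E" "lo x < y" "y < hi x" for x y
  proof -
    have g: "\<forall>z\<in>E. z \<le> lo x \<or> hi x \<le> z" using gap[OF that(1)] by blast
    have xx: "lo x < x" "x < hi x" using gap[OF that(1)] by auto
    have yE: "y \<notin> E"
    proof
      assume "y \<in> E" then have "y \<le> lo x \<or> hi x \<le> y" using g by blast
      then show False using that by linarith
    qed
    have c: "(z \<le> y \<longleftrightarrow> z \<le> x) \<and> (y \<le> z \<longleftrightarrow> x \<le> z)" if "z \<in> E" for z
    proof -
      have "z \<le> lo x \<or> hi x \<le> z" using g that by blast
      then show ?thesis using xx \<open>lo x < y\<close> \<open>y < hi x\<close> by linarith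
    qed
    have "E \<inter> {..y} = E \<inter> {..x}" using c by auto
    moreover have "E \<inter> {y..} = E \<inter> {x..}" using c by auto
    ultimately show ?thesis using yE unfolding lo_def hi_def by simp
  qed
  define g where "g x = (if x \<in> E then f x else G (lo x) (hi x) x)" for x
  have gout: "isCont g x" if "x \<notin> E" for x
  proof -
    have ab: "lo x \<in> E" "hi x \<in> E" "lo x < hi x" using lo hi gap[OF that] by auto
    have "continuous_on {lo x..hi x} (G (lo x) (hi x))" using Gadm[OF ab] unfolding adm_def by blast
    then have "continuous_on {lo x<..<hi x} (G (lo x) (hi x))" by (rule continuous_on_subset) auto
    moreover have "continuous_on {lo x<..<hi x} g = continuous_on {lo x<..<hi x} (G (lo x) (hi x))"
      by (rule continuous_on_cong) (use gap2[OF that] in \<open>auto simp: g_def\<close>)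
    ultimately have "continuous_on {lo x<..<hi x} g" by simp
    then show ?thesis using continuous_on_eq_continuous_at[of "{lo x<..<hi x}" g] gap[OF that] by auto
  qed
  have gH: "(x, g x) \<in> H" for x
  proof (cases "x \<in> E")
    case True then show ?thesis using fH by (simp add: g_def)
  next
    case False
    have ab: "lo x \<in> E" "hi x \<in> E" "lo x < hi x" using lo hi gap[OF False] by auto
    then show ?thesis using Gadm[OF ab] gap[OF False] False unfolding adm_def g_def by auto
  qed
  have Sbound: "\<bar>g y - f p\<bar> < 4 * e" if pE: "p \<in> E" and e: "e > 0" and y: "y \<notin> E"
     and d1: "\<forall>z\<in>E. \<bar>z - p\<bar> < d1 \<longrightarrow> \<bar>f z - f p\<bar> < e"
     and k: "continuous_on {lo y..hi y} k" "\<forall>x\<in>{lo y..hi y}. (x, k x) \<in> H"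
        "\<forall>x\<in>{lo y..hi y}. \<bar>k x - f p\<bar> < e"
     and near: "\<bar>lo y - p\<bar> < d1" "\<bar>hi y - p\<bar> < d1" "hi y - lo y < e" for p e y d1 k
  proof -
    let ?a = "lo y" and ?b = "hi y"
    have ab: "?a \<in> E" "?b \<in> E" "?a < ?b" using lo hi gap[OF y] by auto
    have fa: "\<bar>f ?a - f p\<bar> < e" "\<bar>f ?b - f p\<bar> < e" using d1 near ab by auto
    obtain h where h: "continuous_on {?a..?b} h" "h ?a = f ?a" "h ?b = f ?b" "\<forall>x\<in>{?a..?b}. (x, h x)\<in>H"
      "\<forall>x\<in>{?a..?b}. \<bar>h x - f p\<bar> < e"
      using key[OF fc ab(3) k, of "f ?a" "f ?b"] fH ab fa by blast
    have "\<forall>x\<in>{?a..?b}. \<bar>h x - f ?a\<bar> \<le> 2 * e"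
    proof
      fix x assume "x \<in> {?a..?b}"
      then have "\<bar>h x - f p\<bar> < e" using h by blast
      then show "\<bar>h x - f ?a\<bar> \<le> 2 * e" using fa by linarith
    qed
    then have "2 * e \<in> S ?a ?b" unfolding S_def adm_def using h by blast
    from Gprop[OF ab(3) this] have "\<bar>G ?a ?b y - f ?a\<bar> \<le> 2 * e + (?b - ?a)"
      using gap[OF y] by auto
    moreover have "g y = G ?a ?b y" using y by (simp add: g_def)
    ultimately show ?thesis using fa near by linarith
  qed
  have right: "\<exists>d>0. \<forall>y. p < y \<and> y < p + d \<longrightarrow> \<bar>g y - f p\<bar> < e" if pE: "p \<in> E" and e: "e > 0" for p e
  proof (cases "\<exists>q>p. \<forall>z\<in>E. \<not> (p < z \<and> z < q)")
    case True
    then obtain q where q: "q > p" "\<forall>z\<in>E. \<not> (p < z \<and> z < q)" by blast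
    define y1 where "y1 = (p + q) / 2"
    have y1: "p < y1" "y1 < q" using q by (auto simp: y1_def)
    have y1E: "y1 \<notin> E" using q y1 by auto
    have loy1: "lo y1 = p"
    proof -
      have "p \<le> lo y1" using lo[of y1] pE y1 by auto
      moreover have "\<not> p < lo y1" using lo[of y1] q y1 by force
      ultimately show ?thesis by simp
    qed
    define b0 where "b0 = hi y1"
    have b0: "b0 \<in> E" "y1 < b0" using hi gap[OF y1E] by (auto simp: b0_def)
    have ad: "adm p b0 (G p b0)" using Gadm[OF pE b0(1)] b0 y1 by simp
    then obtain d where d: "d > 0" "\<forall>x\<in>{p..b0}. \<bar>x - p\<bar> < d \<longrightarrow> \<bar>G p b0 x - f p\<bar> < e"
      using cont_near[of "{p..b0}" "G p b0" p "f p" e] e b0 y1 unfolding adm_def by auto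
    show ?thesis
    proof (intro exI[of _ "min d (b0 - p)"] conjI allI impI)
      fix y assume yy: "p < y \<and> y < p + min d (b0 - p)"
      have yb: "y < b0" using yy by linarith
      have "lo y1 < y" "y < hi y1" using yy yb loy1 b0_def by auto
      then have "y \<notin> E \<and> lo y = p \<and> hi y = b0" using gap2[OF y1E, of y] loy1 b0_def by auto
      then have "g y = G p b0 y" by (simp add: g_def)
      then show "\<bar>g y - f p\<bar> < e" using d yy by auto
    qed (use d b0 y1 in auto)
  next
    case False
    then have dense: "\<forall>q>p. \<exists>z\<in>E. p < z \<and> z < q" by auto
    define e' where "e' = e / 4"
    have e': "e' > 0" using e by (simp add: e'_def)
    obtain d1 where d1: "d1 > 0" "\<forall>z\<in>E. \<bar>z - p\<bar> < d1 \<longrightarrow> \<bar>f z - f p\<bar> < e'"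
      using fcont pE e' by blast
    obtain yq where yq: "(p + 1, yq) \<in> H" using yH by blast
    obtain k where k: "continuous_on {p..p+1} k" "k p = f p" "\<forall>x\<in>{p..p+1}. (x, k x)\<in>H"
      using conn[OF fc _ yq, of p "f p"] fH pE by auto
    obtain d2 where d2: "d2 > 0" "\<forall>x\<in>{p..p+1}. \<bar>x - p\<bar> < d2 \<longrightarrow> \<bar>k x - f p\<bar> < e'"
      using cont_near[OF k(1), of p "f p" e'] k(2) e' by auto
    define d0 where "d0 = min (min d1 d2) (min 1 e')"
    have d0: "d0 > 0" "d0 \<le> d1" "d0 \<le> d2" "d0 \<le> 1" "d0 \<le> e'" using d1 d2 e' by (auto simp: d0_def)
    have "p + d0 > p" using d0 by simp
    then obtain z where z: "z \<in> E" "p < z" "z < p + d0" using dense by blast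
    show ?thesis
    proof (intro exI[of _ "z - p"] conjI allI impI)
      fix y assume yy: "p < y \<and> y < p + (z - p)"
      show "\<bar>g y - f p\<bar> < e"
      proof (cases "y \<in> E")
        case True
        then show ?thesis using d1 d0 yy z e' by (auto simp: g_def e'_def)
      next
        case False
        have pa: "p \<le> lo y" using lo[of y] pE yy by auto
        have bz: "hi y \<le> z" using hi[of y] z yy by auto
        have pa': "p < lo y"
        proof (rule ccontr)
          assume "\<not> p < lo y"
          then have "lo y = p" using pa by simp
          moreover obtain z' where "z' \<in> E" "p < z'" "z' < hi y" using dense gap[OF False] yy by force
          ultimately show False using gap[OF False] by force
        qed
        have sub: "{lo y..hi y} \<subseteq> {p..p+1}" using pa bz z d0 by auto
        have "\<bar>g y - f p\<bar> < 4 * e'"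
        proof (rule Sbound[OF pE e' False d1(2)])
          show "continuous_on {lo y..hi y} k" using continuous_on_subset[OF k(1) sub] .
          show "\<forall>x\<in>{lo y..hi y}. (x, k x) \<in> H" using k(3) sub by blast
          show "\<forall>x\<in>{lo y..hi y}. \<bar>k x - f p\<bar> < e'" using d2 sub pa bz z d0 by force
          show "\<bar>lo y - p\<bar> < d1" "\<bar>hi y - p\<bar> < d1" "hi y - lo y < e'"
            using pa' bz z d0 gap[OF False] by auto
        qed
        then show ?thesis by (simp add: e'_def)
      qed
    qed (use z in auto)
  qed
  have left: "\<exists>d>0. \<forall>y. p - d < y \<and> y < p \<longrightarrow> \<bar>g y - f p\<bar> < e" if pE: "p \<in> E" and e: "e > 0" for p e
  proof (cases "\<exists>q<p. \<forall>z\<in>E. \<not> (q < z \<and> z < p)")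
    case True
    then obtain q where q: "q < p" "\<forall>z\<in>E. \<not> (q < z \<and> z < p)" by blast
    define y1 where "y1 = (q + p) / 2"
    have y1: "q < y1" "y1 < p" using q by (auto simp: y1_def)
    have y1E: "y1 \<notin> E" using q y1 by auto
    have hiy1: "hi y1 = p"
    proof -
      have "hi y1 \<le> p" using hi[of y1] pE y1 by auto
      moreover have "\<not> hi y1 < p" using hi[of y1] q y1 by force
      ultimately show ?thesis by simp
    qed
    define a0 where "a0 = lo y1"
    have a0: "a0 \<in> E" "a0 < y1" using lo gap[OF y1E] by (auto simp: a0_def)
    have ad: "adm a0 p (G a0 p)" using Gadm[OF a0(1) pE] a0 y1 by simp
    then obtain d where d: "d > 0" "\<forall>x\<in>{a0..p}. \<bar>x - p\<bar> < d \<longrightarrow> \<bar>G a0 p x - f p\<bar> < e"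
      using cont_near[of "{a0..p}" "G a0 p" p "f p" e] e a0 y1 unfolding adm_def by auto
    show ?thesis
    proof (intro exI[of _ "min d (p - a0)"] conjI allI impI)
      fix y assume yy: "p - min d (p - a0) < y \<and> y < p"
      have ya: "a0 < y" using yy by linarith
      have "lo y1 < y" "y < hi y1" using yy ya hiy1 a0_def by auto
      then have "y \<notin> E \<and> lo y = a0 \<and> hi y = p" using gap2[OF y1E, of y] hiy1 a0_def by auto
      then have "g y = G a0 p y" by (simp add: g_def)
      then show "\<bar>g y - f p\<bar> < e" using d yy ya by auto
    qed (use d a0 y1 in auto)
  next
    case False
    then have dense: "\<forall>q<p. \<exists>z\<in>E. q < z \<and> z < p" by auto
    define e' where "e' = e / 4"
    have e': "e' > 0" using e by (simp add: e'_def)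
    obtain d1 where d1: "d1 > 0" "\<forall>z\<in>E. \<bar>z - p\<bar> < d1 \<longrightarrow> \<bar>f z - f p\<bar> < e'"
      using fcont pE e' by blast
    obtain yq where yq: "(p - 1, yq) \<in> H" using yH by blast
    have pp: "p - 1 < p" by simp
    obtain k where k: "continuous_on {p-1..p} k" "k p = f p" "\<forall>x\<in>{p-1..p}. (x, k x)\<in>H"
      using conn[OF fc yq _ pp, of "f p"] fH pE by auto
    obtain d2 where d2: "d2 > 0" "\<forall>x\<in>{p-1..p}. \<bar>x - p\<bar> < d2 \<longrightarrow> \<bar>k x - f p\<bar> < e'"
      using cont_near[OF k(1), of p "f p" e'] k(2) e' by auto
    define d0 where "d0 = min (min d1 d2) (min 1 e')"
    have d0: "d0 > 0" "d0 \<le> d1" "d0 \<le> d2" "d0 \<le> 1" "d0 \<le> e'" using d1 d2 e' by (auto simp: d0_def)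
    have "p - d0 < p" using d0 by simp
    then obtain z where z: "z \<in> E" "p - d0 < z" "z < p" using dense by blast
    show ?thesis
    proof (intro exI[of _ "p - z"] conjI allI impI)
      fix y assume yy: "p - (p - z) < y \<and> y < p"
      show "\<bar>g y - f p\<bar> < e"
      proof (cases "y \<in> E")
        case True
        then show ?thesis using d1 d0 yy z e' by (auto simp: g_def e'_def)
      next
        case False
        have pa: "hi y \<le> p" using hi[of y] pE yy by auto
        have bz: "z \<le> lo y" using lo[of y] z yy by auto
        have pa': "hi y < p"
        proof (rule ccontr)
          assume "\<not> hi y < p"
          then have "hi y = p" using pa by simp
          moreover obtain z' where "z' \<in> E" "lo y < z'" "z' < p" using dense gap[OF False] yy by force
          ultimately show False using gap[OF False] by force
        qed
        have sub: "{lo y..hi y} \<subseteq> {p-1..p}" using pa bz z d0 by auto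
        have "\<bar>g y - f p\<bar> < 4 * e'"
        proof (rule Sbound[OF pE e' False d1(2)])
          show "continuous_on {lo y..hi y} k" using continuous_on_subset[OF k(1) sub] .
          show "\<forall>x\<in>{lo y..hi y}. (x, k x) \<in> H" using k(3) sub by blast
          show "\<forall>x\<in>{lo y..hi y}. \<bar>k x - f p\<bar> < e'" using d2 sub pa bz z d0 by force
          show "\<bar>lo y - p\<bar> < d1" "\<bar>hi y - p\<bar> < d1" "hi y - lo y < e'"
            using pa' bz z d0 gap[OF False] by auto
        qed
        then show ?thesis by (simp add: e'_def)
      qed
    qed (use z in auto)
  qed
  have gin: "isCont g p" if pE: "p \<in> E" for p
    unfolding isCont_def LIM_eq
  proof (intro allI impI)
    fix r :: real assume r: "r > 0"
    obtain d1 where d1: "d1 > 0" "\<forall>y. p < y \<and> y < p + d1 \<longrightarrow> \<bar>g y - f p\<bar> < r" using right[OF pE r] by blast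
    obtain d2 where d2: "d2 > 0" "\<forall>y. p - d2 < y \<and> y < p \<longrightarrow> \<bar>g y - f p\<bar> < r" using left[OF pE r] by blast
    show "\<exists>s>0. \<forall>x. x \<noteq> p \<and> norm (x - p) < s \<longrightarrow> norm (g x - g p) < r"
    proof (intro exI[of _ "min d1 d2"] conjI allI impI)
      fix x assume x: "x \<noteq> p \<and> norm (x - p) < min d1 d2"
      have gp: "g p = f p" using pE by (simp add: g_def)
      show "norm (g x - g p) < r"
      proof (cases "x < p")
        case True then show ?thesis using d2 x gp by auto
      next
        case False then show ?thesis using d1 x gp by auto
      qed
    qed (use d1 d2 in auto)
  qed
  have "continuous_on UNIV g"
    by (intro continuous_at_imp_continuous_on ballI) (metis gin gout)
  moreover have "\<forall>x\<in>E. g x = f x" by (simp add: g_def)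
  ultimately show ?thesis using gH by blast
qed

lemma int_close: "(z::real) \<in> \<int> \<Longrightarrow> p \<in> \<int> \<Longrightarrow> \<bar>z - p\<bar> < 1 \<Longrightarrow> z = p"
proof (elim Ints_cases)
  fix m n :: int assume *: "z = of_int m" "p = of_int n" "\<bar>z - p\<bar> < 1"
  then have "\<bar>real_of_int (m - n)\<bar> < 1" by simp
  then have "\<bar>m - n\<bar> < 1" by linarith
  then show "z = p" using * by simp
qed

theorem lemma4p4:
  fixes H :: "(real \<times> real) set"
  assumes "functionally_connected H"
    and "fst ` H = UNIV"
  shows "\<forall>(f :: real \<Rightarrow> real) (E :: real set).
           continuous_on UNIV f \<and> closed E \<and> (\<forall>x \<in> E. (x, f x) \<in> H) \<longrightarrow>
           (\<exists>g :: real \<Rightarrow> real. continuous_on UNIV g \<and> (\<forall>x \<in> E. g x = f x) \<and>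
              (\<forall>x. (x, g x) \<in> H))"
proof (intro allI impI, elim conjE)
  fix f :: "real \<Rightarrow> real" and E :: "real set"
  assume fc: "continuous_on UNIV f" and cE: "closed E" and fH: "\<forall>x \<in> E. (x, f x) \<in> H"
  have yH: "\<forall>x. \<exists>y. (x,y)\<in>H"
  proof
    fix x :: real
    have "x \<in> fst ` H" using assms(2) by simp
    then show "\<exists>y. (x,y)\<in>H" by force
  qed
  define E' where "E' = E \<union> \<int>"
  define f' where "f' x = (if x \<in> E then f x else (SOME y. (x,y)\<in>H))" for x
  have cE': "closed E'" unfolding E'_def by (intro closed_Un cE closed_Ints)
  have lb: "\<forall>x. \<exists>a\<in>E'. a \<le> x"
  proof
    fix x :: real
    have "of_int \<lfloor>x\<rfloor> \<in> E'" unfolding E'_def by simp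
    then show "\<exists>a\<in>E'. a \<le> x" using of_int_floor_le by blast
  qed
  have ub: "\<forall>x. \<exists>b\<in>E'. x \<le> b"
  proof
    fix x :: real
    have "of_int \<lceil>x\<rceil> \<in> E'" unfolding E'_def by simp
    then show "\<exists>b\<in>E'. x \<le> b" using le_of_int_ceiling by blast
  qed
  have f'H: "\<forall>x\<in>E'. (x, f' x)\<in>H"
  proof
    fix x assume "x \<in> E'"
    show "(x, f' x) \<in> H"
    proof (cases "x \<in> E")
      case True then show ?thesis using fH by (simp add: f'_def)
    next
      case False
      have "(x, SOME y. (x,y)\<in>H) \<in> H" using yH by (meson someI_ex)
      then show ?thesis using False by (simp add: f'_def)
    qed
  qed
  have f'c: "\<forall>p\<in>E'. \<forall>e>0. \<exists>d>0. \<forall>z\<in>E'. \<bar>z - p\<bar> < d \<longrightarrow> \<bar>f' z - f' p\<bar> < e"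
  proof (intro ballI allI impI)
    fix p e :: real assume pE: "p \<in> E'" and e: "e > 0"
    show "\<exists>d>0. \<forall>z\<in>E'. \<bar>z - p\<bar> < d \<longrightarrow> \<bar>f' z - f' p\<bar> < e"
    proof (cases "p \<in> E")
      case True
      obtain d1 where d1: "d1 > 0" "\<forall>z. dist z p < d1 \<longrightarrow> dist (f z) (f p) < e"
        using fc e unfolding continuous_on_iff by blast
      have "closed (\<int> - E :: real set)" by (rule closed_subset_Ints) auto
      then have "open (- (\<int> - E) :: real set)" by (rule open_Compl)
      moreover have "p \<in> - (\<int> - E)" using True by simp
      ultimately obtain d2 where d2: "d2 > 0" "\<forall>z. dist z p < d2 \<longrightarrow> z \<in> - (\<int> - E)"
        unfolding open_dist by blast
      show ?thesis
      proof (intro exI[of _ "min d1 d2"] conjI ballI impI)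
        fix z assume z: "z \<in> E'" "\<bar>z - p\<bar> < min d1 d2"
        have "z \<in> E" using d2 z unfolding E'_def by (auto simp: dist_real_def)
        then show "\<bar>f' z - f' p\<bar> < e" using d1 z True by (auto simp: f'_def dist_real_def)
      qed (use d1 d2 in auto)
    next
      case False
      then have pZ: "p \<in> \<int>" using pE unfolding E'_def by auto
      have "open (- E)" using cE by (rule open_Compl)
      moreover have "p \<in> - E" using False by simp
      ultimately obtain d2 where d2: "d2 > 0" "\<forall>z. dist z p < d2 \<longrightarrow> z \<in> - E"
        unfolding open_dist by blast
      show ?thesis
      proof (intro exI[of _ "min 1 d2"] conjI ballI impI)
        fix z assume z: "z \<in> E'" "\<bar>z - p\<bar> < min 1 d2"
        have "z \<notin> E" using d2 z by (auto simp: dist_real_def)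
        then have "z \<in> \<int>" using z unfolding E'_def by auto
        then have "z = p" using int_close[OF _ pZ] z by auto
        then show "\<bar>f' z - f' p\<bar> < e" using e by simp
      qed (use d2 in auto)
    qed
  qed
  obtain g where g: "continuous_on UNIV g" "\<forall>x\<in>E'. g x = f' x" "\<forall>x. (x, g x)\<in>H"
    using main[OF assms(1) cE' lb ub f'H f'c yH] by blast
  have "\<forall>x\<in>E. g x = f x" using g(2) unfolding E'_def f'_def by auto
  then show "\<exists>g. continuous_on UNIV g \<and> (\<forall>x\<in>E. g x = f x) \<and> (\<forall>x. (x, g x) \<in> H)"
    using g by blast
qed

end
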